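(* Let $L$ be a subsemifield of $\mathbb{R}_\mathrm{max}$ containing $\mathbb{Z}_\mathrm{max}$ which is finitely generated as a $\mathbb{Z}_\mathrm{max}$-semimodule. Then there exists a positive integer $n$ such that $L=(\frac{1}{n}\mathbb{Z})_\mathrm{max}$.
   Context: For a totally ordered abelian group $M$, $M_\mathrm{max}=M\cup\{-\infty\}$ is the idempotent semifield whose addition is $\max$ and whose multiplication is the group operation of $M$ (extended by $-\infty$ being absorbing). Thus $\mathbb{R}_\mathrm{max}$, $\mathbb{Z}_\mathrm{max}$ and $(\frac{1}{n}\mathbb{Z})_\mathrm{max}$ arise from the subgroups $\mathbb{R}\supseteq\frac1n\mathbb{Z}\supseteq\mathbb{Z}$, and $\mathbb{Z}_\mathrm{max}\subseteq(\frac1n\mathbb{Z})_\mathrm{max}\subseteq\mathbb{R}_\mathrm{max}$. *)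

theory Defs
  imports Complex_Main
begin

text \<open>The idempotent semifield R_max = R \<union> {-\<infinity>}, modelled as real option,
  where None stands for -\<infinity>. Semifield addition is max, multiplication is +.\<close>

type_synonym rmax = "real option"

definition mx_add :: "rmax \<Rightarrow> rmax \<Rightarrow> rmax" where
  "mx_add a b = (case a of None \<Rightarrow> b
      | Some x \<Rightarrow> (case b of None \<Rightarrow> Some x | Some y \<Rightarrow> Some (max x y)))"

definition mx_mul :: "rmax \<Rightarrow> rmax \<Rightarrow> rmax" where
  "mx_mul a b = (case a of None \<Rightarrow> None
      | Some x \<Rightarrow> (case b of None \<Rightarrow> None | Some y \<Rightarrow> Some (x + y)))"

definition mx_inv :: "rmax \<Rightarrow> rmax" where
  "mx_inv a = map_option uminus a"

text \<open>Zero is -\<infinity> (None), one is the real number 0.\<close>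
definition subsemifield :: "rmax set \<Rightarrow> bool" where
  "subsemifield L \<longleftrightarrow> None \<in> L \<and> Some 0 \<in> L
     \<and> (\<forall>a\<in>L. \<forall>b\<in>L. mx_add a b \<in> L)
     \<and> (\<forall>a\<in>L. \<forall>b\<in>L. mx_mul a b \<in> L)
     \<and> (\<forall>a\<in>L. a \<noteq> None \<longrightarrow> mx_inv a \<in> L)"

definition Mmax :: "real set \<Rightarrow> rmax set" where
  "Mmax M = insert None (Some ` M)"

definition Zmax :: "rmax set" where
  "Zmax = Mmax (range real_of_int)"

definition frac_Zmax :: "nat \<Rightarrow> rmax set" where
  "frac_Zmax n = Mmax {real_of_int k / real n | k. True}"

definition mx_lincomb :: "rmax list \<Rightarrow> rmax list \<Rightarrow> rmax" where
  "mx_lincomb cs gs = foldr mx_add (map2 mx_mul cs gs) None"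

definition fin_gen_Zmax_semimodule :: "rmax set \<Rightarrow> bool" where
  "fin_gen_Zmax_semimodule L \<longleftrightarrow>
     (\<exists>gs. set gs \<subseteq> L \<and>
        (\<forall>x\<in>L. \<exists>cs. length cs = length gs \<and> set cs \<subseteq> Zmax \<and> x = mx_lincomb cs gs))"

end

theory Submission
  imports Defs
begin

lemma mx_add_Some: "mx_add a b = Some x \<Longrightarrow> a = Some x \<or> b = Some x"
  by (auto simp: mx_add_def max_def split: option.splits if_splits)

lemma lincomb_Some:
  "foldr mx_add (map2 mx_mul cs gs) None = Some x \<Longrightarrow> set cs \<subseteq> Zmax \<Longrightarrow>
   \<exists>c g. Some g \<in> set gs \<and> c \<in> range real_of_int \<and> x = c + g"
proof (induction cs arbitrary: gs)
  case Nil then show ?case by simp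
next
  case (Cons c cs)
  show ?case
  proof (cases gs)
    case Nil then show ?thesis using Cons by simp
  next
    case (Cons g gs')
    have "mx_add (mx_mul c g) (foldr mx_add (map2 mx_mul cs gs') None) = Some x"
      using Cons.prems Cons by simp
    then have "mx_mul c g = Some x \<or> foldr mx_add (map2 mx_mul cs gs') None = Some x"
      by (rule mx_add_Some)
    then show ?thesis
    proof
      assume h: "mx_mul c g = Some x"
      then obtain a b where ab: "c = Some a" "g = Some b" "x = a + b"
        by (auto simp: mx_mul_def split: option.splits)
      have "c \<in> Zmax" using Cons.prems by simp
      then have "a \<in> range real_of_int" using ab by (auto simp: Zmax_def Mmax_def)
      then show ?thesis using ab Cons by auto
    next
      assume "foldr mx_add (map2 mx_mul cs gs') None = Some x"
      then show ?thesis using Cons.IH[of gs'] Cons.prems Cons by auto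
    qed
  qed
qed

lemma nat_mult_mem:
  assumes add: "\<And>a b. a \<in> M \<Longrightarrow> b \<in> M \<Longrightarrow> a + b \<in> M" and z: "0 \<in> M" and a: "a \<in> M"
  shows "real n * a \<in> M"
proof (induction n)
  case 0 then show ?case using z by simp
next
  case (Suc n)
  have "real (Suc n) * a = real n * a + a" by (simp add: algebra_simps)
  then show ?case using add[OF Suc a] by simp
qed

lemma int_mult_mem:
  assumes add: "\<And>a b. a \<in> M \<Longrightarrow> b \<in> M \<Longrightarrow> a + b \<in> M" and z: "0 \<in> M"
    and neg: "\<And>a. a \<in> M \<Longrightarrow> - a \<in> M" and a: "a \<in> M"
  shows "real_of_int j * a \<in> M"
proof (cases "j \<ge> 0")
  case True
  then have e: "real_of_int j = real (nat j)" by simp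
  show ?thesis unfolding e by (rule nat_mult_mem[OF add z a])
next
  case False
  then have e: "real_of_int j * a = - (real (nat (-j)) * a)" by simp
  show ?thesis unfolding e by (rule neg[OF nat_mult_mem[OF add z a]])
qed

theorem mainTheorem8:
  fixes L :: "rmax set"
  assumes "subsemifield L"
    and "Zmax \<subseteq> L"
    and "fin_gen_Zmax_semimodule L"
  shows "\<exists>n::nat. n > 0 \<and> L = frac_Zmax n"
proof -
  define M where "M = {x. Some x \<in> L}"
  have LM: "L = insert None (Some ` M)"
  proof -
    have "None \<in> L" using assms(1) by (simp add: subsemifield_def)
    moreover have "y \<in> L \<Longrightarrow> y \<in> insert None (Some ` M)" for y
      by (cases y) (auto simp: M_def)
    ultimately show ?thesis by (auto simp: M_def)
  qed
  have add: "a + b \<in> M" if "a \<in> M" "b \<in> M" for a b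
  proof -
    have "mx_mul (Some a) (Some b) \<in> L" using assms(1) that by (auto simp: subsemifield_def M_def)
    then show ?thesis by (simp add: mx_mul_def M_def)
  qed
  have neg: "- a \<in> M" if "a \<in> M" for a
  proof -
    have "mx_inv (Some a) \<in> L" using assms(1) that by (auto simp: subsemifield_def M_def)
    then show ?thesis by (simp add: mx_inv_def M_def)
  qed
  have z: "0 \<in> M" using assms(1) by (simp add: subsemifield_def M_def)
  have one: "1 \<in> M"
  proof -
    have "Some (real_of_int 1) \<in> Zmax" unfolding Zmax_def Mmax_def by blast
    then show ?thesis using assms(2) by (auto simp: M_def)
  qed
  obtain gs where gs: "set gs \<subseteq> L"
    and gen: "\<forall>x\<in>L. \<exists>cs. length cs = length gs \<and> set cs \<subseteq> Zmax \<and> x = mx_lincomb cs gs"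
    using assms(3) by (auto simp: fin_gen_Zmax_semimodule_def)
  define G where "G = {g. Some g \<in> set gs}"
  have finG: "finite G"
  proof -
    have "G \<subseteq> the ` set gs" unfolding G_def by force
    then show ?thesis by (rule finite_subset) simp
  qed
  have cover: "\<exists>c g. g \<in> G \<and> c \<in> range real_of_int \<and> x = c + g" if "x \<in> M" for x
  proof -
    from that have "Some x \<in> L" by (simp add: M_def)
    then obtain cs where "set cs \<subseteq> Zmax" "Some x = mx_lincomb cs gs" using gen by blast
    then show ?thesis using lincomb_Some[of cs gs x] by (auto simp: mx_lincomb_def G_def)
  qed
  define S where "S = M \<inter> {0<..1}"
  have finS: "finite S"
  proof -
    have "S \<subseteq> insert 1 ((\<lambda>g. g - of_int \<lfloor>g\<rfloor>) ` G)"
    proof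
      fix x assume "x \<in> S"
      then have xM: "x \<in> M" and x0: "0 < x" and x1: "x \<le> 1" by (auto simp: S_def)
      show "x \<in> insert 1 ((\<lambda>g. g - of_int \<lfloor>g\<rfloor>) ` G)"
      proof (cases "x = 1")
        case False
        then have x1': "x < 1" using x1 by simp
        obtain c g where cg: "g \<in> G" "c \<in> range real_of_int" "x = c + g" using cover[OF xM] by blast
        then obtain k where k: "c = real_of_int k" by auto
        have "\<lfloor>g\<rfloor> = - k"
        proof -
          have "g = x - k" using cg k by simp
          then show ?thesis using x0 x1' by (simp add: floor_eq_iff)
        qed
        then have "x = g - of_int \<lfloor>g\<rfloor>" using cg k by simp
        then show ?thesis using cg by auto
      qed simp
    qed
    then show ?thesis by (rule finite_subset) (simp add: finG)
  qed
  have Sne: "S \<noteq> {}" using one by (auto simp: S_def)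
  define m where "m = Min S"
  have mS: "m \<in> S" unfolding m_def using finS Sne by (rule Min_in)
  have m0: "0 < m" and m1: "m \<le> 1" and mM: "m \<in> M" using mS by (auto simp: S_def)
  have mmin: "m \<le> y" if "y \<in> S" for y unfolding m_def using finS that by simp
  have mult: "\<exists>j::int. x = j * m" if "x \<in> M" for x
  proof -
    define j where "j = \<lfloor>x / m\<rfloor>"
    define r where "r = x - j * m"
    have rM: "r \<in> M" unfolding r_def
      using add[OF that neg[OF int_mult_mem[OF add z neg mM, of j]]] by simp
    have "j \<le> x / m" "x / m < j + 1" unfolding j_def by linarith+
    then have "j * m \<le> x" "x < (j + 1) * m" using m0 by (simp_all add: field_simps)
    then have r0: "0 \<le> r" and rm: "r < m" unfolding r_def by (simp_all add: algebra_simps)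
    have "r = 0"
    proof (rule ccontr)
      assume "r \<noteq> 0"
      then have "r \<in> S" using r0 rm m1 rM by (auto simp: S_def)
      then show False using mmin rm by force
    qed
    then show ?thesis unfolding r_def by auto
  qed
  obtain k :: int where k: "1 = k * m" using mult[OF one] by blast
  have "0 < real_of_int k * m" using k by simp
  then have "0 < real_of_int k" using m0 zero_less_mult_pos2 by blast
  then have kpos: "k > 0" by simp
  define n where "n = nat k"
  have n0: "n > 0" using kpos by (simp add: n_def)
  have nk: "real n = real_of_int k" using kpos by (simp add: n_def)
  have mn: "m = 1 / real n" using k nk kpos by (simp add: eq_divide_eq mult.commute)
  have "M = {real_of_int j / real n | j. True}"
  proof
    show "M \<subseteq> {real_of_int j / real n | j. True}"
    proof
      fix x assume "x \<in> M"
      then obtain j :: int where "x = j * m" using mult by blast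
      then show "x \<in> {real_of_int j / real n | j. True}" using mn by auto
    qed
  next
    show "{real_of_int j / real n | j. True} \<subseteq> M"
    proof
      fix x assume "x \<in> {real_of_int j / real n | j. True}"
      then obtain j :: int where "x = j / real n" by blast
      then have "x = j * m" using mn by simp
      then show "x \<in> M" using int_mult_mem[OF add z neg mM, of j] by simp
    qed
  qed
  then have "L = frac_Zmax n" using LM by (simp add: frac_Zmax_def Mmax_def)
  then show ?thesis using n0 by blast
qed

end
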